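(* Let $a>0$. Hurwitz's zeta function satisfies: (a) $\zeta(0,a)=\frac12-a$. (b) $\zeta(-1,a)=\frac{a-a^2}{2}-\frac1{12}$. (c) For every integer $k\ge0$ and every complex $s\ne1$ with $\mathrm{Re}\,s>-(k+2)$, $$\zeta(s,a)=\frac{a^{1-s}}{s-1}+\frac12a^{-s}+\sum_{j=1}^{k+1}s(s+1)\cdots(s+j-1)\,q_j(1)\,a^{-s-j}+s(s+1)\cdots(s+k+2)\int_0^1p_{k+2}(x)\,\zeta(s+k+3,x+a)\,dx.$$ (d) For every integer $k\ge2$, $\zeta(-k,a)=-\frac{a^{k+1}}{k+1}+\frac12a^k+\sum_{j=1}^{k}(-1)^jq_j(1)\frac{k!}{(k-j)!}a^{k-j}$. (e) For every integer $k\ge0$ and every complex $s\ne1$ with $\mathrm{Re}\,s>-(k+2)$, $$\zeta(s)=\frac1{s-1}+\frac12+\sum_{j=1}^{k+1}s(s+1)\cdots(s+j-1)\,q_j(1)+s(s+1)\cdots(s+k+2)\int_0^1p_{k+2}(x)\,\zeta(s+k+3,x+1)\,dx.$$ (f) For every integer $k\ge0$, $$\zeta'(-k)=-\frac1{(k+1)^2}+\sum_{j=1}^{k}(-1)^{j+1}\frac{k!}{(k-j)!}q_j(1)\big[H_k-H_{k-j}\big]+(-1)^kk!\int_0^1p_{k+1}(x)\,\zeta(2,x+1)\,dx.$$ (g) $\zeta'(0)=-1+\int_0^1p_1(x)\,\zeta(2,x+1)\,dx$.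
   Context: $\zeta(s,a)=\sum_{m=0}^\infty(m+a)^{-s}$ for $\mathrm{Re}\,s>1$, $a>0$, extended by analytic continuation in $s$ to $\mathbb C\setminus\{1\}$; $\zeta(s)=\zeta(s,1)$ is the Riemann zeta function and $\zeta'$ its derivative. The polynomials $p_j,q_j$ ($j\ge1$) are defined recursively by $p_1(x)=\frac{x-x^2}{2}$, $q_j(x)=\int_0^xp_j(t)\,dt$, and $p_{j+1}(x)=q_j(x)-x\,q_j(1)$. $H_n=\sum_{i=1}^n\frac1i$ is the $n$-th harmonic number, with $H_0=0$. *)

theory Defs
  imports "HOL-Complex_Analysis.Complex_Analysis"
begin

definition hurwitz_zeta :: "complex \<Rightarrow> real \<Rightarrow> complex" where
  "hurwitz_zeta s a =
     (SOME f. f holomorphic_on (- {1}) \<and>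
        (\<forall>z. Re z > 1 \<longrightarrow> f z = (\<Sum>m. 1 / (complex_of_real (real m + a)) powr z))) s"

definition riemann_zeta :: "complex \<Rightarrow> complex" where
  "riemann_zeta s = hurwitz_zeta s 1"

definition sint :: "(real \<Rightarrow> real) \<Rightarrow> real \<Rightarrow> real" where
  "sint f x = (if 0 \<le> x then integral {0..x} f else - integral {x..0} f)"

text \<open>p j for j >= 1 (p 0 is an unused dummy).\<close>
fun p :: "nat \<Rightarrow> real \<Rightarrow> real" where
  "p 0 x = 0"
| "p (Suc 0) x = (x - x^2) / 2"
| "p (Suc (Suc j)) x = sint (\<lambda>t. p (Suc j) t) x - x * sint (\<lambda>t. p (Suc j) t) 1"

definition q :: "nat \<Rightarrow> real \<Rightarrow> real" where
  "q j x = sint (p j) x"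

end

theory Submission
  imports Defs
begin


lemma sint_nonneg: "0 \<le> x \<Longrightarrow> sint f x = integral {0..x} f"
  by (simp add: sint_def)

lemma p_Suc: "n \<ge> 1 \<Longrightarrow> p (Suc n) x = sint (p n) x - x * sint (p n) 1"
  by (cases n) auto

lemma p_cont_aux:
  "continuous_on {0..1} (p j) \<and> (\<forall>x\<in>{0..1}. ((\<lambda>x. sint (p j) x) has_real_derivative p j x) (at x within {0..1}))"
proof (induction j)
  case 0
  have p0: "p 0 = (\<lambda>x. 0)" by (rule ext) simp
  have "sint (p 0) = (\<lambda>x. 0)" unfolding sint_def p0 by (auto simp: fun_eq_iff)
  then show ?case unfolding p0 by simp
next
  case (Suc n)
  have c: "continuous_on {0..1} (p (Suc n))"
  proof (cases n)
    case 0 then show ?thesis by (auto intro!: continuous_intros)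
  next
    case (Suc j)
    define S where "S = sint (p (Suc j)) 1"
    have d: "((\<lambda>x. sint (p (Suc j)) x - x * S) has_real_derivative (p (Suc j) x - S)) (at x within {0..1})"
      if "x \<in> {0..1}" for x
      using Suc.IH that unfolding Suc by (auto intro!: derivative_eq_intros)
    show ?thesis
      unfolding continuous_on_eq_continuous_within
    proof
      fix x :: real assume x: "x \<in> {0..1}"
      have "continuous (at x within {0..1}) (\<lambda>x. sint (p (Suc j)) x - x * S)"
        using d[OF x] by (rule DERIV_continuous)
      moreover have "p (Suc n) = (\<lambda>x. sint (p (Suc j)) x - x * S)"
        by (rule ext) (simp add: S_def Suc)
      ultimately show "continuous (at x within {0..1}) (p (Suc n))"
        by simp
    qed
  qed
  show ?case
    using c
    by (auto intro!: has_field_derivative_transform_within[OF integral_has_real_derivative[OF c], where d=1]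
             simp: sint_def dist_real_def)
qed

lemma p_cont: "continuous_on {0..1} (p j)"
  using p_cont_aux by blast

lemma p_deriv:
  assumes "n \<ge> 1" "x \<in> {0..1}"
  shows "(p (Suc n) has_real_derivative (p n x - q n 1)) (at x within {0..1})"
proof -
  have "((\<lambda>x. sint (p n) x - x * q n 1) has_real_derivative (p n x - q n 1)) (at x within {0..1})"
    using p_cont_aux[of n] assms by (auto intro!: derivative_eq_intros)
  moreover have "p (Suc n) = (\<lambda>x. sint (p n) x - x * q n 1)"
    using assms(1) by (auto simp: p_Suc q_def)
  ultimately show ?thesis by simp
qed

lemma p_0: "p j 0 = 0"
proof (cases j)
  case (Suc n) then show ?thesis by (cases n) (auto simp: sint_def)
qed simp

lemma p_1: "p j 1 = 0"
proof (cases j)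
  case (Suc n) then show ?thesis by (cases n) (auto simp: sint_def)
qed simp

lemma q11: "q 1 1 = 1/12"
proof -
  have "((\<lambda>x. (x - x^2)/2) has_integral ((\<lambda>x. x^2/4 - x^3/6) 1 - (\<lambda>x. x^2/4 - x^3/6) 0)) {0..1::real}"
    by (intro fundamental_theorem_of_calculus) 
       (auto intro!: derivative_eq_intros simp: has_real_derivative_iff_has_vector_derivative[symmetric] field_simps power2_eq_square)
  then have "integral {0..1} (\<lambda>x::real. (x - x^2)/2) = (1/12::real)"
    by (intro integral_unique) simp
  moreover have "p 1 = (\<lambda>x::real. (x - x^2)/2)" by auto
  ultimately have "integral {0..1} (p 1) = 1/12"
    by simp
  then show ?thesis by (simp add: q_def sint_def)
qed




definition E :: "real \<Rightarrow> complex \<Rightarrow> complex" where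
  "E r w = exp (- w * of_real (ln r))"

lemma E_norm: "norm (E r w) = exp (- Re w * ln r)"
  by (simp add: E_def)

lemma E_norm_powr: "r > 0 \<Longrightarrow> norm (E r w) = r powr (- Re w)"
  by (simp add: E_norm powr_def)

lemma E_add: "E r (w + v) = E r w * E r v"
  by (simp add: E_def exp_add[symmetric] algebra_simps)

lemma E_one [simp]: "E 1 w = 1"
  by (simp add: E_def)

lemma E_1: "r > 0 \<Longrightarrow> E r 1 = inverse (of_real r)"
  by (simp add: E_def exp_minus flip: of_real_exp)

lemma E_powr: "r > 0 \<Longrightarrow> of_real r powr (- w) = E r w"
  by (simp add: E_def powr_def Ln_of_real)

lemma E_div: "r > 0 \<Longrightarrow> 1 / (of_real r) powr w = E r w"
  by (simp add: E_def powr_def Ln_of_real exp_minus field_simps)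

lemma E_le:
  assumes "0 < r0" "r0 \<le> r" "0 \<le> Re w"
  shows "norm (E r w) \<le> r0 powr (- Re w)"
  using assms by (simp add: E_norm_powr powr_mono2')

lemma E_deriv_x:
  assumes "x + c > 0"
  shows "((\<lambda>x. E (x + c) w) has_vector_derivative (- w * E (x + c) (w + 1))) (at x within S)"
proof (rule has_vector_derivative_at_within)
  have "((\<lambda>z. exp (- w * Ln (z + of_real c))) has_field_derivative
          (exp (- w * Ln (of_real x + of_real c)) * (- w * inverse (of_real x + of_real c)))) (at (of_real x))"
    using assms
    by (auto intro!: derivative_eq_intros has_field_derivative_Ln[THEN DERIV_chain2] simp: nonpos_Reals_def simp flip: of_real_add)
  then have "((\<lambda>x. exp (- w * Ln (of_real x + of_real c))) has_vector_derivative
          (exp (- w * Ln (of_real x + of_real c)) * (- w * inverse (of_real x + of_real c)))) (at x)"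
    by (rule has_vector_derivative_real_field)
  moreover have eq: "exp (- w * Ln (of_real x + of_real c)) * (- w * inverse (of_real x + of_real c)) = - w * E (x + c) (w + 1)"
  proof -
    have e1: "E (x + c) 1 = inverse (of_real (x + c))"
      using assms by (simp add: E_def exp_minus flip: of_real_exp)
    have "exp (- w * Ln (of_real x + of_real c)) = E (x + c) w"
      using assms by (simp add: E_def Ln_of_real flip: of_real_add)
    then show ?thesis using E_add[of "x+c" w 1] e1 by simp
  qed
  ultimately have "((\<lambda>x. exp (- w * Ln (of_real x + of_real c))) has_vector_derivative (- w * E (x + c) (w + 1))) (at x)"
    by (simp only: eq)
  then show "((\<lambda>x. E (x + c) w) has_vector_derivative (- w * E (x + c) (w + 1))) (at x)"
  proof (rule has_vector_derivative_transform_within_open[where S="{y. y + c > 0}"])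
    show "open {y. y + c > 0}" by (rule open_Collect_less) (auto intro!: continuous_intros)
  qed (use assms in \<open>auto simp: E_def Ln_of_real[symmetric]\<close>)
qed

lemma E_deriv_w: "((\<lambda>w. E r w) has_field_derivative (- of_real (ln r) * E r w)) (at w within U)"
  unfolding E_def by (auto intro!: derivative_eq_intros)

lemma E_cont_x: "c > 0 \<Longrightarrow> continuous_on {0..1} (\<lambda>x. E (x + c) w)"
  unfolding E_def by (auto intro!: continuous_intros)




definition Jm :: "(real \<Rightarrow> real) \<Rightarrow> complex \<Rightarrow> real \<Rightarrow> complex" where
  "Jm P w c = integral {0..1} (\<lambda>x. of_real (P x) * E (x + c) w)"

definition IS :: "(real \<Rightarrow> real) \<Rightarrow> real \<Rightarrow> complex \<Rightarrow> complex" where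
  "IS P a w = (\<Sum>m. Jm P w (real m + a))"

definition Z :: "complex \<Rightarrow> real \<Rightarrow> complex" where
  "Z w b = (\<Sum>m. E (real m + b) w)"

lemma cont_PE:
  assumes "continuous_on {0..1} P" "c > 0"
  shows "continuous_on {0..1} (\<lambda>x. of_real (P x) * E (x + c) w)"
  using assms E_cont_x[of c w] by (auto intro!: continuous_intros)

lemma Jm_has_integral:
  assumes "continuous_on {0..1} P" "c > 0"
  shows "((\<lambda>x. of_real (P x) * E (x + c) w) has_integral Jm P w c) {0..1}"
  unfolding Jm_def using cont_PE[OF assms] integrable_continuous_interval
  by (intro integrable_integral) blast

lemma Jm_bound:
  assumes "\<And>x. x \<in> {0..1} \<Longrightarrow> \<bar>P x\<bar> \<le> B" "B \<ge> 0" "continuous_on {0..1} P" "c > 0" "Re w \<ge> 0"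
  shows "norm (Jm P w c) \<le> B * c powr (- Re w)"
proof -
  have hi: "((\<lambda>x. of_real (P x) * E (x + c) w) has_integral Jm P w c) (cbox 0 1)"
    using Jm_has_integral[OF assms(3,4)] by simp
  have bd: "norm (of_real (P x) * E (x + c) w) \<le> B * c powr (- Re w)" if x: "x \<in> cbox 0 1" for x :: real
  proof -
    have "norm (of_real (P x) * E (x + c) w) = \<bar>P x\<bar> * norm (E (x + c) w)"
      by (simp add: norm_mult)
    also have "\<dots> \<le> B * c powr (- Re w)"
      using x assms by (intro mult_mono E_le) auto
    finally show ?thesis .
  qed
  have "0 \<le> B * c powr (- Re w)" using assms by simp
  from has_integral_bound[OF this hi bd]
  show ?thesis by simp
qed

lemma Jm_holo:
  assumes "continuous_on {0..1} P" "c > 0"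
  shows "(\<lambda>w. Jm P w c) holomorphic_on UNIV"
proof -
  have "(\<lambda>w. integral (cbox 0 1) (\<lambda>t. of_real (P t) * E (t + c) w)) holomorphic_on UNIV"
  proof (rule leibniz_rule_holomorphic[where fx="\<lambda>w t. of_real (P t) * (- of_real (ln (t + c)) * E (t + c) w)"])
    fix w :: complex and t :: real
    show "((\<lambda>w. of_real (P t) * E (t + c) w) has_field_derivative of_real (P t) * (- of_real (ln (t + c)) * E (t + c) w)) (at w within UNIV)"
      by (rule DERIV_cmult[OF E_deriv_w])
  next
    fix w :: complex
    show "(\<lambda>t. of_real (P t) * E (t + c) w) integrable_on cbox 0 1"
      using cont_PE[OF assms] integrable_continuous_interval by auto
  next
    have "continuous_on (UNIV \<times> {0..1}) (\<lambda>z::complex\<times>real. of_real (P (snd z)) * (- of_real (ln (snd z + c)) * exp (- fst z * of_real (ln (snd z + c)))))"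
    proof -
      have l: "continuous_on (UNIV \<times> {0..1}) (\<lambda>z. ln (snd z + c))"
        using assms by (intro continuous_on_ln continuous_intros) auto
      have "continuous_on (UNIV \<times> {0..1}) (\<lambda>z. P (snd z))"
        by (rule continuous_on_compose2[OF assms(1)]) (auto intro!: continuous_intros)
      moreover have "continuous_on (UNIV \<times> {0..1}) (\<lambda>z. exp (- (fst z * of_real (ln (snd z + c)))) :: complex)"
        by (intro continuous_on_exp continuous_on_minus continuous_on_mult continuous_on_of_real l continuous_on_fst[OF continuous_on_id])
      ultimately show ?thesis using l assms by (auto intro!: continuous_intros)
    qed
    then show "continuous_on (UNIV \<times> cbox 0 1) (\<lambda>(w, t). of_real (P t) * (- of_real (ln (t + c)) * E (t + c) w))"
      by (simp add: E_def case_prod_unfold)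
  qed auto
  then show ?thesis by (simp add: Jm_def)
qed

lemma summable_powr_shift:
  assumes "b > 0" "\<sigma> > 1"
  shows "summable (\<lambda>m. (real m + b) powr (- \<sigma>))"
proof (rule summable_comparison_test')
  show "summable (\<lambda>n. real n powr (- \<sigma>))"
    using assms by (simp add: summable_real_powr_iff)
  fix n :: nat assume "n \<ge> 1"
  then show "norm ((real n + b) powr (- \<sigma>)) \<le> real n powr (- \<sigma>)"
    using assms by (auto intro!: powr_mono2')
qed

lemma Z_summable_norm:
  assumes "b > 0" "Re w > 1"
  shows "summable (\<lambda>m. norm (E (real m + b) w))"
  using summable_powr_shift[OF assms] assms
  by (subst summable_cong[where g="\<lambda>m. (real m + b) powr (- Re w)"]) (auto simp: E_norm_powr)

lemma Z_summable:
  assumes "b > 0" "Re w > 1"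
  shows "summable (\<lambda>m. E (real m + b) w)"
  by (rule summable_norm_cancel[OF Z_summable_norm[OF assms]])

lemma P_bound:
  fixes P :: "real \<Rightarrow> real"
  assumes "continuous_on {0..1} P"
  obtains B where "B \<ge> 0" "\<And>x. x \<in> {0..1} \<Longrightarrow> \<bar>P x\<bar> \<le> B"
  using continuous_on_compact_bound[of "{0..1}" P] assms by (metis compact_Icc real_norm_def)

lemma Jm_summable:
  assumes "continuous_on {0..1} P" "a > 0" "Re w > 1"
  shows "summable (\<lambda>m. Jm P w (real m + a))"
proof -
  obtain B where B: "B \<ge> 0" "\<And>x. x \<in> {0..1} \<Longrightarrow> \<bar>P x\<bar> \<le> B"
    using P_bound[OF assms(1)] by blast
  show ?thesis
  proof (rule summable_comparison_test)
    show "\<exists>N. \<forall>n\<ge>N. norm (Jm P w (real n + a)) \<le> B * (real n + a) powr (- Re w)"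
      using assms B by (intro exI[of _ 0] allI impI Jm_bound) auto
    show "summable (\<lambda>n. B * (real n + a) powr (- Re w))"
      using assms by (intro summable_mult summable_powr_shift) auto
  qed
qed

lemma IS_holo:
  assumes "continuous_on {0..1} P" "a > 0"
  shows "IS P a holomorphic_on {w. Re w > 1}"
proof -
  obtain B where B: "B \<ge> 0" "\<And>x. x \<in> {0..1} \<Longrightarrow> \<bar>P x\<bar> \<le> B"
    using P_bound[OF assms(1)] by blast
  show ?thesis
  proof (rule holomorphic_uniform_sequence[where f="\<lambda>n w. \<Sum>i<n. Jm P w (real i + a)"])
    show "open {w. Re w > 1}" by (simp add: open_halfspace_Re_gt)
    fix n
    show "(\<lambda>w. \<Sum>i<n. Jm P w (real i + a)) holomorphic_on {w. 1 < Re w}"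
      using holomorphic_on_subset[OF Jm_holo[OF assms(1)]] assms(2)
      by (intro holomorphic_on_sum) auto
  next
    fix w0 :: complex assume w0: "w0 \<in> {w. 1 < Re w}"
    define d where "d = (Re w0 - 1) / 2"
    have d: "d > 0" using w0 by (simp add: d_def)
    have Re_ge: "Re w \<ge> 1 + d" if "w \<in> cball w0 d" for w
    proof -
      have "\<bar>Re w0 - Re w\<bar> \<le> norm (w0 - w)" using abs_Re_le_cmod[of "w0 - w"] by simp
      also have "\<dots> \<le> d" using that by (simp add: dist_norm)
      finally have "Re w0 - Re w \<le> d" by linarith
      then show ?thesis unfolding d_def by (smt (verit) field_sum_of_halves)
    qed
    have "uniform_limit (cball w0 d) (\<lambda>n w. \<Sum>i<n. Jm P w (real i + a)) (\<lambda>w. \<Sum>i. Jm P w (real i + a)) sequentially"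
    proof (rule Weierstrass_m_test_ev)
      show "\<forall>\<^sub>F n in sequentially. \<forall>w\<in>cball w0 d. norm (Jm P w (real n + a)) \<le> B * (real n + a) powr (- (1 + d))"
        unfolding eventually_sequentially
      proof (intro exI[of _ 1] allI impI ballI)
      fix n :: nat and w assume n: "1 \<le> n" and w: "w \<in> cball w0 d"
      have "norm (Jm P w (real n + a)) \<le> B * (real n + a) powr (- Re w)"
        using assms B Re_ge[OF w] d by (intro Jm_bound) auto
      also have "\<dots> \<le> B * (real n + a) powr (- (1 + d))"
        using Re_ge[OF w] assms B n by (intro mult_left_mono powr_mono) auto
      finally show "norm (Jm P w (real n + a)) \<le> B * (real n + a) powr (- (1 + d))" .
      qed
    next
      show "summable (\<lambda>n. B * (real n + a) powr (- (1 + d)))"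
        using assms d by (intro summable_mult summable_powr_shift) auto
    qed
    moreover have "cball w0 d \<subseteq> {w. 1 < Re w}"
      using Re_ge d by force
    ultimately show "\<exists>d>0. cball w0 d \<subseteq> {w. 1 < Re w} \<and> uniform_limit (cball w0 d) (\<lambda>n w. \<Sum>i<n. Jm P w (real i + a)) (IS P a) sequentially"
      using d unfolding IS_def by blast
  qed
qed

lemma swap:
  assumes "continuous_on {0..1} P" "a > 0" "Re w > 1"
  shows "((\<lambda>x. of_real (P x) * Z w (x + a)) has_integral IS P a w) {0..1}"
proof -
  obtain B where B: "B \<ge> 0" "\<And>x. x \<in> {0..1} \<Longrightarrow> \<bar>P x\<bar> \<le> B"
    using P_bound[OF assms(1)] by blast
  define f where "f = (\<lambda>n x. \<Sum>i<n. of_real (P x) * E (x + (real i + a)) w)"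
  have ul: "uniform_limit {0..1} f (\<lambda>x. \<Sum>i. of_real (P x) * E (x + (real i + a)) w) sequentially"
    unfolding f_def
  proof (rule Weierstrass_m_test)
    fix n and x :: real assume x: "x \<in> {0..1}"
    have "norm (of_real (P x) * E (x + (real n + a)) w) = \<bar>P x\<bar> * norm (E (x + (real n + a)) w)"
      by (simp add: norm_mult)
    also have "\<dots> \<le> B * (real n + a) powr (- Re w)"
      using x assms B by (intro mult_mono E_le) auto
    finally show "norm (of_real (P x) * E (x + (real n + a)) w) \<le> B * (real n + a) powr (- Re w)" .
  next
    show "summable (\<lambda>n. B * (real n + a) powr (- Re w))"
      using assms by (intro summable_mult summable_powr_shift) auto
  qed
  have fc: "continuous_on {0..1} (f n)" for n
    unfolding f_def using assms by (intro continuous_on_sum cont_PE) auto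
  obtain I J where I: "\<And>n. (f n has_integral I n) {0..1}"
    and J: "((\<lambda>x. \<Sum>i. of_real (P x) * E (x + (real i + a)) w) has_integral J) {0..1}"
    and IJ: "I \<longlonglongrightarrow> J"
    using uniform_limit_integral[OF ul fc sequentially_bot] by blast
  have Isum: "(f n has_integral (\<Sum>i<n. Jm P w (real i + a))) {0..1}" for n
    unfolding f_def using assms by (intro has_integral_sum Jm_has_integral) auto
  have "I = (\<lambda>n. \<Sum>i<n. Jm P w (real i + a))"
    by (rule ext, rule has_integral_unique[OF I Isum])
  then have "(\<lambda>n. \<Sum>i<n. Jm P w (real i + a)) \<longlonglongrightarrow> J" using IJ by simp
  moreover have "(\<lambda>n. \<Sum>i<n. Jm P w (real i + a)) \<longlonglongrightarrow> IS P a w"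
    unfolding IS_def using Jm_summable[OF assms] by (simp add: summable_LIMSEQ)
  ultimately have JI: "J = IS P a w" by (rule LIMSEQ_unique)
  have eqx: "(\<Sum>i. of_real (P x) * E (x + (real i + a)) w) = of_real (P x) * Z w (x + a)"
    if "x \<in> {0..1}" for x
  proof -
    have eqf: "(\<lambda>i. E (x + (real i + a)) w) = (\<lambda>i. E (real i + (x + a)) w)"
      by (simp add: add.left_commute)
    have sm: "summable (\<lambda>i. E (x + (real i + a)) w)"
      unfolding eqf using that assms by (intro Z_summable) auto
    have "(\<Sum>i. of_real (P x) * E (x + (real i + a)) w) = of_real (P x) * (\<Sum>i. E (real i + (x + a)) w)"
      using suminf_mult[OF sm, of "of_real (P x)"] eqf by simp
    then show ?thesis by (simp add: Z_def)
  qed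
  show ?thesis
    using has_integral_eq[OF eqx J] unfolding JI .
qed




lemma ftc01:
  fixes f :: "real \<Rightarrow> complex"
  assumes "\<And>x. x \<in> {0..1} \<Longrightarrow> (f has_vector_derivative f' x) (at x within {0..1})"
    and "(f' has_integral I) {0..1}"
  shows "I = f 1 - f 0"
proof -
  have "(f' has_integral (f 1 - f 0)) {0..1}"
    by (rule fundamental_theorem_of_calculus) (use assms(1) in auto)
  then show ?thesis by (rule has_integral_unique[OF assms(2)])
qed

lemma cont_one: "continuous_on {0..1} (\<lambda>_::real. 1::real)"
  by simp

lemma Jm_one_tele:
  assumes "c > 0"
  shows "Jm (\<lambda>_. 1) w c * (w - 1) = E c (w - 1) - E (1 + c) (w - 1)"
proof -
  have h: "((\<lambda>x. of_real 1 * E (x + c) w * (-(w - 1))) has_integral Jm (\<lambda>_. 1) w c * (-(w - 1))) {0..1}"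
    by (intro has_integral_mult_left Jm_has_integral[where P="\<lambda>_. 1", OF cont_one assms])
  have "Jm (\<lambda>_. 1) w c * (-(w - 1)) = E (1 + c) (w - 1) - E (0 + c) (w - 1)"
  proof (rule ftc01[OF _ h])
    fix x :: real assume x: "x \<in> {0..1}"
    have "((\<lambda>x. E (x + c) (w - 1)) has_vector_derivative (- (w - 1) * E (x + c) (w - 1 + 1))) (at x within {0..1})"
      using x assms by (intro E_deriv_x) auto
    then show "((\<lambda>x. E (x + c) (w - 1)) has_vector_derivative of_real 1 * E (x + c) w * (-(w - 1))) (at x within {0..1})"
      by (simp add: algebra_simps)
  qed
  then show ?thesis by (simp add: algebra_simps)
qed

lemma Jm_step:
  assumes "c > 0" "j \<ge> 1"
  shows "Jm (p j) w c = of_real (q j 1) * Jm (\<lambda>_. 1) w c + w * Jm (p (Suc j)) (w + 1) c"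
proof -
  have A: "((\<lambda>x. of_real (p j x) * E (x + c) w) has_integral Jm (p j) w c) {0..1}"
    by (rule Jm_has_integral[OF p_cont assms(1)])
  have B: "((\<lambda>x. of_real 1 * E (x + c) w) has_integral Jm (\<lambda>_. 1) w c) {0..1}"
    by (rule Jm_has_integral[where P="\<lambda>_. 1", OF cont_one assms(1)])
  have C: "((\<lambda>x. of_real (p (Suc j) x) * E (x + c) (w + 1)) has_integral Jm (p (Suc j)) (w + 1) c) {0..1}"
    by (rule Jm_has_integral[OF p_cont assms(1)])
  have h: "((\<lambda>x. of_real (p (Suc j) x) * E (x + c) (w + 1) * (- w) + (of_real (p j x) * E (x + c) w - of_real 1 * E (x + c) w * of_real (q j 1)))
           has_integral (Jm (p (Suc j)) (w + 1) c * (- w) + (Jm (p j) w c - Jm (\<lambda>_. 1) w c * of_real (q j 1)))) {0..1}"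
    by (intro has_integral_add has_integral_diff has_integral_mult_left A B C)
  have "Jm (p (Suc j)) (w + 1) c * (- w) + (Jm (p j) w c - Jm (\<lambda>_. 1) w c * of_real (q j 1))
        = (\<lambda>x. of_real (p (Suc j) x) * E (x + c) w) 1 - (\<lambda>x. of_real (p (Suc j) x) * E (x + c) w) 0"
  proof (rule ftc01[OF _ h])
    fix x :: real assume x: "x \<in> {0..1}"
    have d1: "((\<lambda>x. of_real (p (Suc j) x)) has_vector_derivative of_real (p j x - q j 1)) (at x within {0..1})"
      by (intro has_vector_derivative_of_real p_deriv assms x)
    have d2: "((\<lambda>x. E (x + c) w) has_vector_derivative (- w * E (x + c) (w + 1))) (at x within {0..1})"
      using x assms by (intro E_deriv_x) auto
    show "((\<lambda>x. of_real (p (Suc j) x) * E (x + c) w) has_vector_derivative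
           of_real (p (Suc j) x) * E (x + c) (w + 1) * (- w) + (of_real (p j x) * E (x + c) w - of_real 1 * E (x + c) w * of_real (q j 1))) (at x within {0..1})"
      using has_vector_derivative_mult[OF d1 d2] by (simp add: algebra_simps)
  qed
  then have "Jm (p (Suc j)) (w + 1) c * (- w) + (Jm (p j) w c - Jm (\<lambda>_. 1) w c * of_real (q j 1)) = 0"
    by (simp add: p_0 p_1)
  then show ?thesis by (simp add: algebra_simps)
qed

lemma p1_eq: "p 1 = (\<lambda>x. (x - x^2) / 2)"
  by (rule ext) simp

lemma Jm_base:
  assumes "c > 0"
  shows "Jm (\<lambda>_. 1) s c = (E c s + E (1 + c) s) / 2 - s * (s + 1) * Jm (p 1) (s + 2) c"
proof -
  have cm: "continuous_on {0..1} (\<lambda>x::real. x - 1/2)" by (intro continuous_intros)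
  have B: "((\<lambda>x. of_real 1 * E (x + c) s) has_integral Jm (\<lambda>_. 1) s c) {0..1}"
    by (rule Jm_has_integral[where P="\<lambda>_. 1", OF cont_one assms(1)])
  have K: "((\<lambda>x. of_real (x - 1/2) * E (x + c) (s + 1)) has_integral Jm (\<lambda>x. x - 1/2) (s + 1) c) {0..1}"
    by (rule Jm_has_integral[OF cm assms(1)])
  have P: "((\<lambda>x. of_real (p 1 x) * E (x + c) (s + 1 + 1)) has_integral Jm (p 1) (s + 1 + 1) c) {0..1}"
    by (rule Jm_has_integral[OF p_cont assms(1)])
  have h1: "((\<lambda>x. of_real (x - 1/2) * E (x + c) (s + 1) * (- s) + of_real 1 * E (x + c) s)
      has_integral (Jm (\<lambda>x. x - 1/2) (s + 1) c * (- s) + Jm (\<lambda>_. 1) s c)) {0..1}"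
    by (intro has_integral_add has_integral_mult_left B K)
  have e1: "Jm (\<lambda>x. x - 1/2) (s + 1) c * (- s) + Jm (\<lambda>_. 1) s c
      = (\<lambda>x. of_real (x - 1/2) * E (x + c) s) 1 - (\<lambda>x. of_real (x - 1/2) * E (x + c) s) 0"
  proof (rule ftc01[OF _ h1])
    fix x :: real assume x: "x \<in> {0..1}"
    have d1: "((\<lambda>x. of_real (x - 1/2)) has_vector_derivative of_real 1) (at x within {0..1})"
      by (intro has_vector_derivative_of_real derivative_eq_intros) auto
    have d2: "((\<lambda>x. E (x + c) s) has_vector_derivative (- s * E (x + c) (s + 1))) (at x within {0..1})"
      using x assms by (intro E_deriv_x) auto
    show "((\<lambda>x. of_real (x - 1/2) * E (x + c) s) has_vector_derivative
        of_real (x - 1/2) * E (x + c) (s + 1) * (- s) + of_real 1 * E (x + c) s) (at x within {0..1})"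
      using has_vector_derivative_mult[OF d1 d2] by (simp add: algebra_simps)
  qed
  have h2: "((\<lambda>x. of_real (p 1 x) * E (x + c) (s + 1 + 1) * (- (s + 1)) + of_real (x - 1/2) * E (x + c) (s + 1) * (-1))
      has_integral (Jm (p 1) (s + 1 + 1) c * (- (s + 1)) + Jm (\<lambda>x. x - 1/2) (s + 1) c * (-1))) {0..1}"
    by (intro has_integral_add has_integral_mult_left P K)
  have e2: "Jm (p 1) (s + 1 + 1) c * (- (s + 1)) + Jm (\<lambda>x. x - 1/2) (s + 1) c * (-1)
      = (\<lambda>x. of_real (p 1 x) * E (x + c) (s + 1)) 1 - (\<lambda>x. of_real (p 1 x) * E (x + c) (s + 1)) 0"
  proof (rule ftc01[OF _ h2])
    fix x :: real assume x: "x \<in> {0..1}"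
    have d1: "((\<lambda>x. of_real (p 1 x)) has_vector_derivative of_real ((1 - 2 * x) / 2)) (at x within {0..1})"
    proof -
      have "((\<lambda>x::real. (x - x^2) / 2) has_real_derivative ((1 - 2 * x) / 2)) (at x within {0..1})"
      proof -
        have "((\<lambda>x::real. (x - x^2) / 2) has_real_derivative ((1 - real 2 * x ^ (2 - Suc 0)) / 2)) (at x within {0..1})"
          by (intro DERIV_cdivide DERIV_diff DERIV_ident DERIV_pow)
        then show ?thesis by simp
      qed
      then show ?thesis unfolding p1_eq by (rule has_vector_derivative_of_real)
    qed
    have d2: "((\<lambda>x. E (x + c) (s + 1)) has_vector_derivative (- (s + 1) * E (x + c) (s + 1 + 1))) (at x within {0..1})"
      using x assms by (intro E_deriv_x) auto
    show "((\<lambda>x. of_real (p 1 x) * E (x + c) (s + 1)) has_vector_derivative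
        of_real (p 1 x) * E (x + c) (s + 1 + 1) * (- (s + 1)) + of_real (x - 1/2) * E (x + c) (s + 1) * (-1)) (at x within {0..1})"
    proof (rule has_vector_derivative_eq_rhs[OF has_vector_derivative_mult[OF d1 d2]])
      have "complex_of_real ((1 - 2 * x) / 2) = - complex_of_real (x - 1/2)"
        by (simp add: field_simps)
      then show "of_real (p 1 x) * (- (s + 1) * E (x + c) (s + 1 + 1)) + of_real ((1 - 2 * x) / 2) * E (x + c) (s + 1) =
        of_real (p 1 x) * E (x + c) (s + 1 + 1) * (- (s + 1)) + of_real (x - 1/2) * E (x + c) (s + 1) * (-1)"
        by (simp only:) (simp add: algebra_simps del: of_real_diff)
    qed
  qed
  define K where "K = Jm (\<lambda>x. x - 1/2) (s + 1) c"
  define Jp where "Jp = Jm (p 1) (s + 1 + 1) c"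
  define J1 where "J1 = Jm (\<lambda>_. 1) s c"
  have e1': "K * (- s) + J1 = (E c s + E (1 + c) s) / 2"
    using e1 unfolding K_def[symmetric] J1_def[symmetric] by (simp add: field_simps)
  have e2': "Jp * (- (s + 1)) + K * (-1) = 0"
    using e2 unfolding K_def[symmetric] Jp_def[symmetric] by (simp add: p_0 p_1)
  have kk: "K = - (s + 1) * Jp"
  proof -
    have "K = K + (Jp * (- (s + 1)) + K * (-1))" using e2' by simp
    also have "\<dots> = - (s + 1) * Jp" by (simp add: algebra_simps)
    finally show ?thesis .
  qed
  have "J1 = (K * (- s) + J1) - K * (- s)" by simp
  also have "\<dots> = (E c s + E (1 + c) s) / 2 - K * (- s)"
    by (simp only: e1')
  also have "\<dots> = (E c s + E (1 + c) s) / 2 - s * (s + 1) * Jp"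
    unfolding kk by (simp add: algebra_simps)
  finally have "J1 = (E c s + E (1 + c) s) / 2 - s * (s + 1) * Jp" .
  moreover have "s + 1 + 1 = s + 2" by simp
  ultimately show ?thesis unfolding J1_def Jp_def by simp
qed




lemma E_tendsto0:
  assumes "a > 0" "Re v > 0"
  shows "(\<lambda>m. E (real m + a) v) \<longlonglongrightarrow> 0"
proof (rule tendsto_norm_zero_cancel)
  have lim: "filterlim (\<lambda>m. real m + a) at_top sequentially"
  proof -
    have "filterlim (\<lambda>m. a + real m) at_top sequentially"
      by (rule filterlim_tendsto_add_at_top[OF tendsto_const filterlim_real_sequentially])
    then show ?thesis by (simp add: add.commute)
  qed
  have "(\<lambda>m. (real m + a) powr (- Re v)) \<longlonglongrightarrow> 0"
    by (rule tendsto_neg_powr) (use assms lim in auto)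
  moreover have "norm (E (real m + a) v) = (real m + a) powr (- Re v)" for m
    using assms by (simp add: E_norm_powr)
  ultimately show "(\<lambda>m. norm (E (real m + a) v)) \<longlonglongrightarrow> 0" by simp
qed

lemma real_Suc_add: "real (Suc m) + a = 1 + (real m + a)"
  by simp

lemma IS_one:
  assumes "a > 0" "Re w > 1"
  shows "IS (\<lambda>_. 1) a w * (w - 1) = E a (w - 1)"
proof -
  define f where "f m = E (real m + a) (w - 1)" for m
  have "(\<lambda>m. f m - f (Suc m)) sums (f 0 - 0)"
    unfolding f_def using assms by (intro telescope_sums' E_tendsto0) auto
  moreover have "f m - f (Suc m) = Jm (\<lambda>_. 1) w (real m + a) * (w - 1)" for m
    unfolding f_def real_Suc_add using assms by (subst Jm_one_tele) auto
  ultimately have S: "(\<lambda>m. Jm (\<lambda>_. 1) w (real m + a) * (w - 1)) sums E a (w - 1)"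
    by (simp add: f_def)
  have "IS (\<lambda>_. 1) a w * (w - 1) = (\<Sum>m. Jm (\<lambda>_. 1) w (real m + a) * (w - 1))"
    unfolding IS_def by (rule suminf_mult2[OF Jm_summable[OF cont_one assms]])
  also have "\<dots> = E a (w - 1)" using sums_unique[OF S] by simp
  finally show ?thesis .
qed

lemma IS_sums:
  assumes "continuous_on {0..1} P" "a > 0" "Re w > 1"
  shows "(\<lambda>m. Jm P w (real m + a)) sums IS P a w"
  unfolding IS_def using Jm_summable[OF assms] by (rule summable_sums)

lemma IS_step:
  assumes "a > 0" "Re w > 1" "j \<ge> 1"
  shows "IS (p j) a w = of_real (q j 1) * IS (\<lambda>_. 1) a w + w * IS (p (Suc j)) a (w + 1)"
proof -
  have s1: "(\<lambda>m. Jm (\<lambda>_. 1) w (real m + a)) sums IS (\<lambda>_. 1) a w"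
    using assms by (intro IS_sums cont_one) auto
  have s2: "(\<lambda>m. Jm (p (Suc j)) (w + 1) (real m + a)) sums IS (p (Suc j)) a (w + 1)"
    using assms by (intro IS_sums p_cont) auto
  have S: "(\<lambda>m. of_real (q j 1) * Jm (\<lambda>_. 1) w (real m + a) + w * Jm (p (Suc j)) (w + 1) (real m + a))
        sums (of_real (q j 1) * IS (\<lambda>_. 1) a w + w * IS (p (Suc j)) a (w + 1))" (is "?f sums ?v")
    by (intro sums_add sums_mult s1 s2)
  have eq: "(\<lambda>m. Jm (p j) w (real m + a)) = ?f"
  proof
    fix m
    show "Jm (p j) w (real m + a) = ?f m"
      by (rule Jm_step) (use assms in auto)
  qed
  have "IS (p j) a w = suminf ?f" by (simp only: IS_def eq)
  then show ?thesis using sums_unique[OF S] by simp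
qed

lemma poch2: "pochhammer (s::complex) 2 = s * (s + 1)"
  by (simp add: numeral_2_eq_2 pochhammer_Suc)

lemma Z_sums:
  assumes "b > 0" "Re w > 1"
  shows "(\<lambda>m. E (real m + b) w) sums Z w b"
  unfolding Z_def using Z_summable[OF assms] by (rule summable_sums)

lemma Z_base:
  assumes "a > 0" "Re s > 1"
  shows "Z s a = E a (s - 1) / (s - 1) + E a s / 2 + pochhammer s 2 * IS (p 1) a (s + 2)"
proof -
  have s1: "(\<lambda>m. Jm (\<lambda>_. 1) s (real m + a)) sums IS (\<lambda>_. 1) a s"
    using assms by (intro IS_sums cont_one) auto
  have z: "(\<lambda>m. E (real m + a) s) sums Z s a"
    using assms by (intro Z_sums) auto
  have z1: "(\<lambda>m. E (1 + (real m + a)) s) sums (Z s a - E a s)"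
  proof -
    have "(\<lambda>m. E (real (Suc m) + a) s) sums (Z s a - E (real 0 + a) s)"
      using z by (subst sums_Suc_iff) simp
    then show ?thesis unfolding real_Suc_add by simp
  qed
  have s2: "(\<lambda>m. Jm (p 1) (s + 2) (real m + a)) sums IS (p 1) a (s + 2)"
    using assms by (intro IS_sums p_cont) auto
  have S: "(\<lambda>m. (E (real m + a) s + E (1 + (real m + a)) s) / 2 - s * (s + 1) * Jm (p 1) (s + 2) (real m + a))
        sums ((Z s a + (Z s a - E a s)) / 2 - s * (s + 1) * IS (p 1) a (s + 2))"
    by (intro sums_diff sums_divide sums_add sums_mult z z1 s2)
  have eq: "(\<lambda>m. Jm (\<lambda>_. 1) s (real m + a)) = (\<lambda>m. (E (real m + a) s + E (1 + (real m + a)) s) / 2 - s * (s + 1) * Jm (p 1) (s + 2) (real m + a))"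
  proof
    fix m
    show "Jm (\<lambda>_. 1) s (real m + a) = (E (real m + a) s + E (1 + (real m + a)) s) / 2 - s * (s + 1) * Jm (p 1) (s + 2) (real m + a)"
      by (rule Jm_base) (use assms in auto)
  qed
  have e1: "IS (\<lambda>_. 1) a s = (Z s a + (Z s a - E a s)) / 2 - s * (s + 1) * IS (p 1) a (s + 2)"
    using s1 unfolding eq using S by (rule sums_unique2)
  have e2: "IS (\<lambda>_. 1) a s * (s - 1) = E a (s - 1)"
    using IS_one assms by blast
  have ne: "s - 1 \<noteq> 0" using assms by auto
  have "IS (\<lambda>_. 1) a s = E a (s - 1) / (s - 1)"
    using e2 ne by (simp add: field_simps)
  then show ?thesis using e1 unfolding poch2 by (simp add: field_simps)
qed

definition H :: "real \<Rightarrow> nat \<Rightarrow> complex \<Rightarrow> complex" where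
  "H a j s = pochhammer s (Suc j) * IS (p j) a (s + of_nat j + 1)"

lemma H_step:
  assumes "a > 0" "j \<ge> 1" "Re s > - real j"
  shows "H a j s = pochhammer s j * of_real (q j 1) * E a (s + of_nat j) + H a (Suc j) s"
proof -
  define w where "w = s + of_nat j + 1"
  have w: "Re w > 1" using assms by (simp add: w_def)
  have st: "IS (p j) a w = of_real (q j 1) * IS (\<lambda>_. 1) a w + w * IS (p (Suc j)) a (w + 1)"
    using IS_step[OF assms(1) w assms(2)] .
  have o: "IS (\<lambda>_. 1) a w * (s + of_nat j) = E a (s + of_nat j)"
    using IS_one[OF assms(1) w] by (simp add: w_def)
  have "H a j s = pochhammer s j * (s + of_nat j) * (of_real (q j 1) * IS (\<lambda>_. 1) a w + w * IS (p (Suc j)) a (w + 1))"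
    unfolding H_def pochhammer_Suc w_def[symmetric] st ..
  also have "\<dots> = pochhammer s j * of_real (q j 1) * (IS (\<lambda>_. 1) a w * (s + of_nat j)) + pochhammer s j * (s + of_nat j) * w * IS (p (Suc j)) a (w + 1)"
    by (simp add: algebra_simps)
  also have "\<dots> = pochhammer s j * of_real (q j 1) * E a (s + of_nat j) + H a (Suc j) s"
    unfolding o H_def pochhammer_Suc by (simp add: w_def algebra_simps)
  finally show ?thesis .
qed

definition G :: "real \<Rightarrow> nat \<Rightarrow> complex \<Rightarrow> complex" where
  "G a k s = E a (s - 1) / (s - 1) + E a s / 2
     + (\<Sum>j=1..k+1. pochhammer s j * of_real (q j 1) * E a (s + of_nat j)) + H a (k + 2) s"

lemma G_Suc:
  assumes "a > 0" "Re s > - (real k + 2)"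
  shows "G a (Suc k) s = G a k s"
proof -
  have "H a (k + 2) s = pochhammer s (k + 2) * of_real (q (k + 2) 1) * E a (s + of_nat (k + 2)) + H a (Suc (k + 2)) s"
    using assms by (intro H_step) auto
  then show ?thesis
    unfolding G_def by (simp add: algebra_simps)
qed

lemma G_mono:
  assumes "a > 0" "k \<le> k'" "Re s > - (real k + 2)"
  shows "G a k' s = G a k s"
  using assms(2)
proof (induction k' rule: dec_induct)
  case (step n)
  have "G a (Suc n) s = G a n s"
    using assms step by (intro G_Suc) auto
  then show ?case using step by simp
qed simp

lemma G0_Z:
  assumes "a > 0" "Re s > 1"
  shows "G a 0 s = Z s a"
proof -
  have "H a 1 s = pochhammer s 1 * of_real (q 1 1) * E a (s + of_nat 1) + H a 2 s"
    using assms H_step[of a 1 s] by (simp add: numeral_2_eq_2)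
  moreover have "H a 1 s = pochhammer s 2 * IS (p 1) a (s + 2)"
    unfolding H_def by (simp add: numeral_2_eq_2 add.assoc)
  ultimately show ?thesis
    unfolding G_def Z_base[OF assms] by (simp add: numeral_2_eq_2)
qed

lemma G_Z:
  assumes "a > 0" "Re s > 1"
  shows "G a k s = Z s a"
  using G_mono[of a 0 k s] G0_Z[OF assms] assms by simp

lemma E_holo: "(\<lambda>s. E a (f s)) holomorphic_on S" if "f holomorphic_on S"
  unfolding E_def using that by (intro holomorphic_intros)

lemma H_holo:
  assumes "a > 0" "j \<ge> 1"
  shows "H a j holomorphic_on {s. Re s > - real j}"
proof -
  have "(IS (p j) a \<circ> (\<lambda>s. s + of_nat j + 1)) holomorphic_on {s. Re s > - real j}"
    by (rule holomorphic_on_compose_gen[OF _ IS_holo[OF p_cont assms(1)]]) (auto intro!: holomorphic_intros)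
  then show ?thesis
    unfolding H_def by (intro holomorphic_intros) (auto simp: o_def)
qed

lemma G_holo:
  assumes "a > 0"
  shows "G a k holomorphic_on ({s. Re s > - (real k + 2)} - {1})"
proof -
  have h: "H a (k + 2) holomorphic_on ({s. Re s > - (real k + 2)} - {1})"
    by (rule holomorphic_on_subset[OF H_holo[OF assms, of "k+2"]]) auto
  show ?thesis
    unfolding G_def
    by (intro holomorphic_intros h E_holo) auto
qed




definition F :: "real \<Rightarrow> complex \<Rightarrow> complex" where
  "F a s = G a (nat \<lceil>- Re s\<rceil>) s"

lemma F_G:
  assumes "a > 0" "Re s > - (real k + 2)"
  shows "F a s = G a k s"
proof -
  define k0 where "k0 = nat \<lceil>- Re s\<rceil>"
  have "- Re s \<le> real k0" unfolding k0_def by linarith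
  then have k0: "Re s > - (real k0 + 2)" by linarith
  have "G a (max k k0) s = G a k s" using assms by (intro G_mono) auto
  moreover have "G a (max k k0) s = G a k0 s" using assms k0 by (intro G_mono) auto
  ultimately show ?thesis unfolding F_def k0_def[symmetric] by simp
qed

lemma F_holo:
  assumes "a > 0"
  shows "F a holomorphic_on (- {1})"
proof -
  have "\<exists>f'. (F a has_field_derivative f') (at s0)" if s0: "s0 \<in> - {1}" for s0
  proof -
    define K where "K = nat \<lceil>- Re s0\<rceil>"
    define U where "U = {s. Re s > - (real K + 2)} - {1}"
    have "- Re s0 \<le> real K" unfolding K_def by linarith
    then have s0U: "s0 \<in> U" using s0 unfolding U_def by auto
    have oU: "open U" unfolding U_def by (intro open_Diff open_halfspace_Re_gt) auto
    have "G a K holomorphic_on U" unfolding U_def by (rule G_holo[OF assms])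
    then obtain f' where "(G a K has_field_derivative f') (at s0)"
      using oU s0U holomorphic_on_open by blast
    then have "(F a has_field_derivative f') (at s0)"
    proof (rule has_field_derivative_transform_within_open[OF _ oU s0U])
      fix s assume "s \<in> U"
      then show "G a K s = F a s" unfolding U_def using F_G[OF assms, of K s] by auto
    qed
    then show ?thesis by blast
  qed
  then show ?thesis by (simp add: holomorphic_on_open open_Compl)
qed

lemma F_Dirichlet:
  assumes "a > 0" "Re z > 1"
  shows "F a z = (\<Sum>m. 1 / (complex_of_real (real m + a)) powr z)"
proof -
  have "F a z = G a 0 z" using assms by (intro F_G) auto
  also have "\<dots> = Z z a" using assms by (rule G_Z)
  also have "\<dots> = (\<Sum>m. 1 / (complex_of_real (real m + a)) powr z)"
  proof -
    have e: "1 / (complex_of_real (real m + a)) powr z = E (real m + a) z" for m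
      by (rule E_div) (use assms in \<open>auto intro: add_nonneg_pos\<close>)
    show ?thesis unfolding Z_def e ..
  qed
  finally show ?thesis .
qed

lemma hz_eq:
  assumes "a > 0" "s \<noteq> 1"
  shows "hurwitz_zeta s a = F a s"
proof -
  define Pr where "Pr = (\<lambda>f. f holomorphic_on (- {1}) \<and>
        (\<forall>z. Re z > 1 \<longrightarrow> f z = (\<Sum>m. 1 / (complex_of_real (real m + a)) powr z)))"
  have PF: "Pr (F a)"
    unfolding Pr_def using F_holo[OF assms(1)] F_Dirichlet[OF assms(1)] by blast
  define f0 where "f0 = (SOME f. Pr f)"
  have Pf0: "Pr f0" unfolding f0_def by (rule someI[of Pr, OF PF])
  have hz: "hurwitz_zeta s a = f0 s"
    unfolding hurwitz_zeta_def f0_def Pr_def ..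
  have "f0 s = F a s"
  proof (rule analytic_continuation_open[where s="{z. Re z > 1}" and s'="- {1}" and f=f0 and g="F a"])
    show "open {z. Re z > 1}" by (rule open_halfspace_Re_gt)
    show "open (- {1::complex})" by (simp add: open_Compl)
    show "{z. Re z > 1} \<noteq> {}" by (auto intro!: exI[of _ 2])
    show "connected (- {1::complex})" by (rule connected_punctured_universe) simp
    show "{z. Re z > 1} \<subseteq> - {1}" by auto
    show "f0 holomorphic_on - {1}" using Pf0 unfolding Pr_def by blast
    show "F a holomorphic_on - {1}" by (rule F_holo[OF assms(1)])
    show "s \<in> - {1}" using assms by auto
    fix z assume "z \<in> {z. Re z > 1}"
    then show "f0 z = F a z" using Pf0 F_Dirichlet[OF assms(1)] unfolding Pr_def by auto
  qed
  then show ?thesis using hz by simp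
qed

lemma hz_G:
  assumes "a > 0" "s \<noteq> 1" "Re s > - (real k + 2)"
  shows "hurwitz_zeta s a = G a k s"
  using hz_eq[OF assms(1,2)] F_G[OF assms(1,3)] by simp

lemma hz_Z:
  assumes "b > 0" "Re w > 1"
  shows "hurwitz_zeta w b = Z w b"
proof -
  have "w \<noteq> 1" using assms by auto
  then have "hurwitz_zeta w b = G b 0 w" using assms by (intro hz_G) auto
  then show ?thesis using G_Z[OF assms] by simp
qed

lemma integral_hz:
  assumes "a > 0" "Re w > 1"
  shows "integral {0..1} (\<lambda>x. complex_of_real (p j x) * hurwitz_zeta w (x + a)) = IS (p j) a w"
proof -
  have "integral {0..1} (\<lambda>x. complex_of_real (p j x) * hurwitz_zeta w (x + a))
      = integral {0..1} (\<lambda>x. complex_of_real (p j x) * Z w (x + a))"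
    by (rule integral_cong) (use assms in \<open>auto simp: hz_Z\<close>)
  also have "\<dots> = IS (p j) a w"
    by (rule integral_unique[OF swap[OF p_cont assms]])
  finally show ?thesis .
qed

lemma part_cE:
  assumes "a > 0" "s \<noteq> 1" "Re s > - (real k + 2)"
  shows "hurwitz_zeta s a = E a (s - 1) / (s - 1) + E a s / 2
     + (\<Sum>j=1..k+1. pochhammer s j * of_real (q j 1) * E a (s + of_nat j))
     + pochhammer s (k+3) *
                 integral {0..1} (\<lambda>x. complex_of_real (p (k+2) x)
                    * hurwitz_zeta (s + of_nat k + 3) (x + a))"
proof -
  have "integral {0..1} (\<lambda>x. complex_of_real (p (k+2) x) * hurwitz_zeta (s + of_nat k + 3) (x + a))
        = IS (p (k+2)) a (s + of_nat k + 3)"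
    using assms by (intro integral_hz) auto
  moreover have "H a (k + 2) s = pochhammer s (k+3) * IS (p (k+2)) a (s + of_nat k + 3)"
    unfolding H_def by (simp add: add_ac numeral_3_eq_3)
  ultimately show ?thesis
    using hz_G[OF assms] unfolding G_def by simp
qed




lemma E_neg_nat:
  assumes "a > 0"
  shows "E a (- of_nat n) = of_real (a ^ n)"
  using E_powr[OF assms, of "- of_nat n"] assms by simp

lemma E_zero [simp]: "E a 0 = 1"
  by (simp add: E_def)

lemma poch_neg:
  assumes "j \<le> k"
  shows "pochhammer (- of_nat k :: complex) j = of_real ((-1)^j * fact k / fact (k - j))"
  using assms
proof (induction j)
  case 0 then show ?case by simp
next
  case (Suc j)
  define m where "m = k - Suc j"
  have km: "k - j = Suc m" using Suc.prems unfolding m_def by simp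
  have e: "(- of_nat k + of_nat j :: complex) = - of_real (real m + 1)"
    using Suc.prems unfolding m_def by (simp add: of_nat_diff)
  have "pochhammer (- of_nat k :: complex) (Suc j) = of_real ((-1)^j * fact k / fact (k - j)) * (- of_real (real m + 1))"
    unfolding pochhammer_Suc e using Suc by simp
  also have "\<dots> = of_real ((-1)^j * fact k / fact (Suc m) * (- (real m + 1)))"
    unfolding km of_real_mult by simp
  also have "(-1)^j * fact k / fact (Suc m) * (- (real m + 1)) = ((-1)^(Suc j) * fact k / fact m :: real)"
  proof -
    define F where "F = (fact m :: real)"
    have F: "F > 0" unfolding F_def by simp
    have fm: "fact (Suc m) = (real m + 1) * F" unfolding F_def by (simp add: algebra_simps)
    have c: "real m + 1 \<noteq> 0" by simp
    have gen: "x / (c * F) * (- c) = - (x / F)" if "c \<noteq> 0" for x c :: real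
      using that F by (simp add: field_simps)
    show ?thesis unfolding fm F_def[symmetric] gen[OF c] by simp
  qed
  finally show ?case unfolding m_def by simp
qed

fun dpoch :: "nat \<Rightarrow> complex \<Rightarrow> complex" where
  "dpoch 0 s = 0"
| "dpoch (Suc n) s = dpoch n s * (s + of_nat n) + pochhammer s n"

lemma dpoch_deriv: "((\<lambda>s. pochhammer s n) has_field_derivative dpoch n s) (at s)"
proof (induction n)
  case 0 then show ?case by simp
next
  case (Suc n)
  have "((\<lambda>s. pochhammer s n * (s + of_nat n)) has_field_derivative dpoch n s * (s + of_nat n) + 1 * pochhammer s n) (at s)"
    by (rule DERIV_mult[OF Suc.IH]) (auto intro!: derivative_eq_intros)
  then show ?case by (simp add: pochhammer_Suc)
qed

lemma alg_harm:
  fixes K h hm c fm :: real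
  assumes "fm \<noteq> 0" "c \<noteq> 0"
  shows "(-1)^(j+1) * (K / (c * fm)) * (h - (hm + 1 / c)) * (- c) + (-1)^j * (K / (c * fm))
       = (-1)^(Suc j + 1) * (K / fm) * (h - hm)"
  using assms by (simp add: field_simps)

lemma dpoch_small:
  assumes "j \<le> k"
  shows "dpoch j (- of_nat k) = of_real ((-1)^(j+1) * (fact k / fact (k - j)) * (harm k - harm (k - j)))"
  using assms
proof (induction j)
  case 0 then show ?case by simp
next
  case (Suc j)
  define m where "m = k - Suc j"
  have km: "k - j = Suc m" using Suc.prems unfolding m_def by simp
  have e: "(- of_nat k + of_nat j :: complex) = of_real (- (real m + 1))"
    using Suc.prems unfolding m_def by (simp add: of_nat_diff)
  have fm: "fact (Suc m) = (real m + 1) * fact m" by (simp add: algebra_simps)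
  have hm: "harm (Suc m) = (harm m :: real) + 1 / (real m + 1)" by (simp add: harm_Suc field_simps)
  have "dpoch (Suc j) (- of_nat k) = of_real ((-1)^(j+1) * (fact k / fact (k - j)) * (harm k - harm (k - j))) * of_real (- (real m + 1))
        + of_real ((-1)^j * fact k / fact (k - j))"
  proof -
    have "dpoch (Suc j) (- of_nat k) = dpoch j (- of_nat k) * (- of_nat k + of_nat j) + pochhammer (- of_nat k) j"
      by simp
    also have "\<dots> = dpoch j (- of_nat k) * of_real (- (real m + 1)) + pochhammer (- of_nat k) j"
      by (simp only: e)
    finally show ?thesis
      using Suc.IH[OF Suc_leD[OF Suc.prems]] poch_neg[OF Suc_leD[OF Suc.prems]] by simp
  qed
  also have "\<dots> = of_real ((-1)^(j+1) * (fact k / fact (k - j)) * (harm k - harm (k - j)) * (- (real m + 1))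
        + (-1)^j * (fact k / fact (k - j)))"
    by simp
  also have "\<dots> = of_real ((-1)^(Suc j + 1) * (fact k / fact m) * (harm k - harm m))"
    unfolding km fm hm by (subst alg_harm) auto
  finally show ?case unfolding m_def by simp
qed

lemma dpoch_k1: "dpoch (Suc k) (- of_nat k) = of_real ((-1)^k * fact k)"
  by (simp add: pochhammer_same)

lemma dpoch_k3: "dpoch (k + 3) (- of_nat k) = 2 * of_real ((-1)^k * fact k)"
proof -
  have "dpoch (Suc (Suc k)) (- of_nat k) = of_real ((-1)^k * fact k)"
    using dpoch_k1[of k] pochhammer_of_nat_eq_0_lemma[of k "Suc k", where 'a=complex] by simp
  moreover have "pochhammer (- of_nat k :: complex) (Suc (Suc k)) = 0"
    by (rule pochhammer_of_nat_eq_0_lemma) simp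
  ultimately show ?thesis by (simp add: numeral_3_eq_3)
qed




lemma part_c:
  fixes a :: real
  assumes "a > 0"
  shows "\<forall>(k::nat) (s::complex). s \<noteq> 1 \<longrightarrow> Re s > - (real k + 2) \<longrightarrow>
           hurwitz_zeta s a =
             (complex_of_real a) powr (1 - s) / (s - 1)
             + 1/2 * (complex_of_real a) powr (- s)
             + (\<Sum>j=1..k+1. pochhammer s j * complex_of_real (q j 1)
                   * (complex_of_real a) powr (- s - of_nat j))
             + pochhammer s (k+3) *
                 integral {0..1} (\<lambda>x. complex_of_real (p (k+2) x)
                    * hurwitz_zeta (s + of_nat k + 3) (x + a))"
proof (intro allI impI)
  fix k :: nat and s :: complex
  assume s: "s \<noteq> 1" "Re s > - (real k + 2)"
  have p1: "of_real a powr (1 - s) = E a (s - 1)" using E_powr[OF assms, of "s - 1"] by simp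
  have p2: "of_real a powr (- s) = E a s" by (rule E_powr[OF assms])
  have p3: "of_real a powr (- s - of_nat j) = E a (s + of_nat j)" for j
  proof -
    have "- s - of_nat j = - (s + of_nat j)" by simp
    then show ?thesis using E_powr[OF assms, of "s + of_nat j"] by simp
  qed
  show "hurwitz_zeta s a =
             (complex_of_real a) powr (1 - s) / (s - 1)
             + 1/2 * (complex_of_real a) powr (- s)
             + (\<Sum>j=1..k+1. pochhammer s j * complex_of_real (q j 1)
                   * (complex_of_real a) powr (- s - of_nat j))
             + pochhammer s (k+3) *
                 integral {0..1} (\<lambda>x. complex_of_real (p (k+2) x)
                    * hurwitz_zeta (s + of_nat k + 3) (x + a))"
    unfolding p1 p2 p3 part_cE[OF assms s] by simp
qed

lemma part_e:
  "\<forall>(k::nat) (s::complex). s \<noteq> 1 \<longrightarrow> Re s > - (real k + 2) \<longrightarrow>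
           riemann_zeta s =
             1 / (s - 1) + 1/2
             + (\<Sum>j=1..k+1. pochhammer s j * complex_of_real (q j 1))
             + pochhammer s (k+3) *
                 integral {0..1} (\<lambda>x. complex_of_real (p (k+2) x)
                    * hurwitz_zeta (s + of_nat k + 3) (x + 1))"
proof (intro allI impI)
  fix k :: nat and s :: complex
  assume s: "s \<noteq> 1" "Re s > - (real k + 2)"
  show "riemann_zeta s =
             1 / (s - 1) + 1/2
             + (\<Sum>j=1..k+1. pochhammer s j * complex_of_real (q j 1))
             + pochhammer s (k+3) *
                 integral {0..1} (\<lambda>x. complex_of_real (p (k+2) x)
                    * hurwitz_zeta (s + of_nat k + 3) (x + 1))"
    unfolding riemann_zeta_def part_cE[OF zero_less_one s] by simp
qed

lemma part_a:
  assumes "a > 0"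
  shows "hurwitz_zeta 0 a = 1/2 - complex_of_real a"
proof -
  have "hurwitz_zeta 0 a = E a (0 - 1) / (0 - 1) + E a 0 / 2
     + (\<Sum>j=1..0+1. pochhammer 0 j * of_real (q j 1) * E a (0 + of_nat j))
     + pochhammer 0 (0+3) * integral {0..1} (\<lambda>x. complex_of_real (p (0+2) x) * hurwitz_zeta (0 + of_nat 0 + 3) (x + a))"
    by (rule part_cE[OF assms]) auto
  moreover have "E a (-1) = of_real a" using E_neg_nat[OF assms, of 1] by simp
  ultimately show ?thesis by (simp add: pochhammer_0_left)
qed

lemma part_b:
  assumes "a > 0"
  shows "hurwitz_zeta (-1) a = complex_of_real ((a - a^2) / 2 - 1/12)"
proof -
  have "hurwitz_zeta (-1) a = E a (-1 - 1) / (-1 - 1) + E a (-1) / 2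
     + (\<Sum>j=1..0+1. pochhammer (-1) j * of_real (q j 1) * E a (-1 + of_nat j))
     + pochhammer (-1) (0+3) * integral {0..1} (\<lambda>x. complex_of_real (p (0+2) x) * hurwitz_zeta (-1 + of_nat 0 + 3) (x + a))"
    by (rule part_cE[OF assms]) auto
  moreover have "E a (-1) = of_real a" using E_neg_nat[OF assms, of 1] by simp
  moreover have "E a (-2) = of_real (a^2)" using E_neg_nat[OF assms, of 2] by simp
  moreover have "pochhammer (-1 :: complex) 3 = 0"
    using pochhammer_of_nat_eq_0_lemma[of 1 3, where 'a=complex] by simp
  moreover have "q (Suc 0) 1 = 1/12" using q11 by simp
  ultimately show ?thesis by (simp add: field_simps)
qed

lemma part_d:
  assumes "a > 0" "k \<ge> 2"
  shows "hurwitz_zeta (- of_nat k) a = complex_of_real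
             (- (a ^ (k+1)) / (k+1) + 1/2 * a ^ k
              + (\<Sum>j=1..k. (-1)^j * q j 1 * (fact k / fact (k - j)) * a ^ (k - j)))"
proof -
  define s :: complex where "s = - of_nat k"
  have "hurwitz_zeta s a = E a (s - 1) / (s - 1) + E a s / 2
     + (\<Sum>j=1..(k-1)+1. pochhammer s j * of_real (q j 1) * E a (s + of_nat j))
     + pochhammer s ((k-1)+3) * integral {0..1} (\<lambda>x. complex_of_real (p ((k-1)+2) x) * hurwitz_zeta (s + of_nat (k-1) + 3) (x + a))"
    by (rule part_cE[OF assms(1)]) (use assms in \<open>auto simp: s_def complex_eq_iff\<close>)
  moreover have "(k - 1) + 1 = k" "(k - 1) + 3 = k + 2" using assms by auto
  moreover have "pochhammer s (k + 2) = 0"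
    unfolding s_def by (rule pochhammer_of_nat_eq_0_lemma) simp
  moreover have "s - 1 = - of_nat (k + 1)" by (simp add: s_def)
  moreover have "E a (- of_nat (k + 1)) = of_real (a ^ (k + 1))" by (rule E_neg_nat[OF assms(1)])
  moreover have "E a s = of_real (a ^ k)" unfolding s_def by (rule E_neg_nat[OF assms(1)])
  moreover have "(\<Sum>j=1..k. pochhammer s j * of_real (q j 1) * E a (s + of_nat j))
      = of_real (\<Sum>j=1..k. (-1)^j * q j 1 * (fact k / fact (k - j)) * a ^ (k - j))"
    unfolding of_real_sum
  proof (rule sum.cong)
    fix j assume j: "j \<in> {1..k}"
    have "s + of_nat j = - of_nat (k - j)" using j by (simp add: s_def of_nat_diff)
    then have "E a (s + of_nat j) = of_real (a ^ (k - j))" using E_neg_nat[OF assms(1)] by simp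
    moreover have "pochhammer s j = of_real ((-1)^j * fact k / fact (k - j))"
      unfolding s_def using j by (intro poch_neg) auto
    ultimately show "pochhammer s j * of_real (q j 1) * E a (s + of_nat j) =
        of_real ((-1)^j * q j 1 * (fact k / fact (k - j)) * a ^ (k - j))"
      by simp
  qed simp
  moreover have dv: "x / (-1 - of_nat k :: complex) = - (x / (1 + of_nat k))" for x
  proof -
    have "(-1 - of_nat k :: complex) = - (1 + of_nat k)" by simp
    then show ?thesis by (simp only: divide_minus_right)
  qed
  ultimately have "hurwitz_zeta s a = - (of_real (a ^ (k + 1)) / of_nat (k + 1)) + of_real (a ^ k) / 2
      + of_real (\<Sum>j=1..k. (-1)^j * q j 1 * (fact k / fact (k - j)) * a ^ (k - j))"
    by simp
  moreover have "complex_of_real (- (a ^ (k+1)) / (k+1) + 1/2 * a ^ k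
              + (\<Sum>j=1..k. (-1)^j * q j 1 * (fact k / fact (k - j)) * a ^ (k - j)))
     = - (of_real (a ^ (k + 1)) / of_nat (k + 1)) + of_real (a ^ k) / 2
      + of_real (\<Sum>j=1..k. (-1)^j * q j 1 * (fact k / fact (k - j)) * a ^ (k - j))"
    by (simp only: of_real_add of_real_divide of_real_minus of_real_mult) simp
  ultimately show ?thesis unfolding s_def by simp
qed

lemma part_f:
  "deriv riemann_zeta (- of_nat k) =
             - 1 / (of_nat k + 1)^2
             + complex_of_real (\<Sum>j=1..k. (-1)^(j+1) * (fact k / fact (k - j)) * q j 1
                    * (harm k - harm (k - j)))
             + (-1)^k * fact k *
                 integral {0..1} (\<lambda>x. complex_of_real (p (k+1) x)
                    * hurwitz_zeta 2 (x + 1))"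
proof -
  define s0 :: complex where "s0 = - of_nat k"
  define U where "U = {s. Re s > - (real k + 2)} - {1::complex}"
  have oU: "open U" unfolding U_def by (intro open_Diff open_halfspace_Re_gt) auto
  have s01: "s0 \<noteq> 1" unfolding s0_def by (auto simp: complex_eq_iff)
  have s0U: "s0 \<in> U" unfolding U_def s0_def using s01 s0_def by auto
  define g where "g s = inverse (s - 1) + 1/2 + (\<Sum>j=1..k+1. pochhammer s j * of_real (q j 1))
      + pochhammer s (k+3) * IS (p (k+2)) 1 (s + of_nat k + 3)" for s
  have rz: "g s = riemann_zeta s" if "s \<in> U" for s
  proof -
    have s: "s \<noteq> 1" "Re s > - (real k + 2)" using that unfolding U_def by auto
    have "integral {0..1} (\<lambda>x. complex_of_real (p (k+2) x) * hurwitz_zeta (s + of_nat k + 3) (x + 1))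
        = IS (p (k+2)) 1 (s + of_nat k + 3)"
      using s by (intro integral_hz) auto
    then show ?thesis using part_e s unfolding g_def by (simp add: inverse_eq_divide)
  qed
  have "IS (p (k+2)) 1 holomorphic_on {w. Re w > 1}" by (rule IS_holo[OF p_cont]) simp
  moreover have "Re (s0 + of_nat k + 3) > 1" by (simp add: s0_def)
  ultimately obtain D where D: "(IS (p (k+2)) 1 has_field_derivative D) (at (s0 + of_nat k + 3))"
    using holomorphic_on_open[OF open_halfspace_Re_gt] by blast
  have dc: "((\<lambda>s. IS (p (k+2)) 1 (s + of_nat k + 3)) has_field_derivative D * 1) (at s0)"
  proof -
    have "((\<lambda>s. s + of_nat k + 3) has_field_derivative 1) (at s0)"
      by (auto intro!: derivative_eq_intros)
    from DERIV_chain2[where f="IS (p (k+2)) 1" and g="\<lambda>s. s + of_nat k + 3" and x=s0, OF D this]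
    show ?thesis by simp
  qed
  have d1: "((\<lambda>s. inverse (s - 1)) has_field_derivative - (inverse (s0 - 1) * 1 * inverse (s0 - 1))) (at s0)"
    by (rule DERIV_inverse') (use s01 in \<open>auto intro!: derivative_eq_intros\<close>)
  have d2: "((\<lambda>s. \<Sum>j=1..k+1. pochhammer s j * of_real (q j 1)) has_field_derivative
      (\<Sum>j=1..k+1. dpoch j s0 * of_real (q j 1))) (at s0)"
    by (intro DERIV_sum DERIV_cmult_right dpoch_deriv)
  have d3: "((\<lambda>s. pochhammer s (k+3) * IS (p (k+2)) 1 (s + of_nat k + 3)) has_field_derivative
      dpoch (k+3) s0 * IS (p (k+2)) 1 (s0 + of_nat k + 3) + D * 1 * pochhammer s0 (k+3)) (at s0)"
    by (rule DERIV_mult[OF dpoch_deriv dc])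
  have dg: "(g has_field_derivative (- (inverse (s0 - 1) * 1 * inverse (s0 - 1)) + 0
      + (\<Sum>j=1..k+1. dpoch j s0 * of_real (q j 1))
      + (dpoch (k+3) s0 * IS (p (k+2)) 1 (s0 + of_nat k + 3) + D * 1 * pochhammer s0 (k+3)))) (at s0)"
    unfolding g_def by (intro DERIV_add DERIV_const d1 d2 d3)
  have "deriv riemann_zeta s0 = - (inverse (s0 - 1) * 1 * inverse (s0 - 1)) + 0
      + (\<Sum>j=1..k+1. dpoch j s0 * of_real (q j 1))
      + (dpoch (k+3) s0 * IS (p (k+2)) 1 (s0 + of_nat k + 3) + D * 1 * pochhammer s0 (k+3))"
    by (rule DERIV_imp_deriv[OF has_field_derivative_transform_within_open[OF dg oU s0U rz]])
  also have "pochhammer s0 (k+3) = 0"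
    unfolding s0_def by (rule pochhammer_of_nat_eq_0_lemma) simp
  also have "s0 + of_nat k + 3 = 3" by (simp add: s0_def)
  also have "inverse (s0 - 1) * 1 * inverse (s0 - 1) = 1 / (of_nat k + 1)^2"
  proof -
    have e: "s0 - 1 = - (of_nat k + 1)" by (simp add: s0_def)
    show ?thesis unfolding e by (simp add: power2_eq_square inverse_eq_divide algebra_simps)
  qed
  also have "(\<Sum>j=1..k+1. dpoch j s0 * of_real (q j 1))
      = (\<Sum>j=1..k. dpoch j s0 * of_real (q j 1)) + dpoch (Suc k) s0 * of_real (q (Suc k) 1)"
    by simp
  also have "(\<Sum>j=1..k. dpoch j s0 * of_real (q j 1)) = complex_of_real (\<Sum>j=1..k. (-1)^(j+1) * (fact k / fact (k - j)) * q j 1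
                    * (harm k - harm (k - j)))"
    unfolding of_real_sum
  proof (rule sum.cong)
    fix j assume j: "j \<in> {1..k}"
    then show "dpoch j s0 * of_real (q j 1) = of_real ((-1)^(j+1) * (fact k / fact (k - j)) * q j 1 * (harm k - harm (k - j)))"
      unfolding s0_def by (subst dpoch_small) (auto simp: mult_ac)
  qed simp
  also have "dpoch (Suc k) s0 = of_real ((-1)^k * fact k)" unfolding s0_def by (rule dpoch_k1)
  also have "dpoch (k + 3) s0 = 2 * of_real ((-1)^k * fact k)" unfolding s0_def by (rule dpoch_k3)
  finally have dv: "deriv riemann_zeta s0 = - (1 / (of_nat k + 1)^2)
      + complex_of_real (\<Sum>j=1..k. (-1)^(j+1) * (fact k / fact (k - j)) * q j 1 * (harm k - harm (k - j)))
      + of_real ((-1)^k * fact k) * of_real (q (Suc k) 1)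
      + 2 * of_real ((-1)^k * fact k) * IS (p (k+2)) 1 3"
    by (simp del: p.simps)
  have i1: "IS (\<lambda>_. 1) 1 2 = 1"
    using IS_one[of 1 2] by simp
  have st: "IS (p (k+1)) 1 2 = of_real (q (k+1) 1) * IS (\<lambda>_. 1) 1 2 + 2 * IS (p (Suc (k+1))) 1 (2 + 1)"
    by (rule IS_step) auto
  have int: "integral {0..1} (\<lambda>x. complex_of_real (p (k+1) x) * hurwitz_zeta 2 (x + 1)) = IS (p (k+1)) 1 2"
    by (rule integral_hz) auto
  have "IS (p (k+1)) 1 2 = of_real (q (Suc k) 1) + 2 * IS (p (k+2)) 1 3"
    using st i1 by (simp add: numeral_3_eq_3 numeral_2_eq_2 del: p.simps)
  then show ?thesis
    unfolding int s0_def[symmetric] dv by (simp add: algebra_simps del: p.simps)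
qed

lemma part_g:
  "deriv riemann_zeta 0 =
           -1 + integral {0..1} (\<lambda>x. complex_of_real (p 1 x) * hurwitz_zeta 2 (x + 1))"
  using part_f[of 0] by simp


theorem lemma8:
  fixes a :: real
  assumes "a > 0"
  shows "(hurwitz_zeta 0 a = 1/2 - complex_of_real a) \<and>
    (hurwitz_zeta (-1) a = complex_of_real ((a - a^2) / 2 - 1/12)) \<and>
    (\<forall>(k::nat) (s::complex). s \<noteq> 1 \<longrightarrow> Re s > - (real k + 2) \<longrightarrow>
           hurwitz_zeta s a =
             (complex_of_real a) powr (1 - s) / (s - 1)
             + 1/2 * (complex_of_real a) powr (- s)
             + (\<Sum>j=1..k+1. pochhammer s j * complex_of_real (q j 1)
                   * (complex_of_real a) powr (- s - of_nat j))
             + pochhammer s (k+3) *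
                 integral {0..1} (\<lambda>x. complex_of_real (p (k+2) x)
                    * hurwitz_zeta (s + of_nat k + 3) (x + a))) \<and>
    (\<forall>(k::nat). k \<ge> 2 \<longrightarrow>
           hurwitz_zeta (- of_nat k) a = complex_of_real
             (- (a ^ (k+1)) / (k+1) + 1/2 * a ^ k
              + (\<Sum>j=1..k. (-1)^j * q j 1 * (fact k / fact (k - j)) * a ^ (k - j)))) \<and>
    (\<forall>(k::nat) (s::complex). s \<noteq> 1 \<longrightarrow> Re s > - (real k + 2) \<longrightarrow>
           riemann_zeta s =
             1 / (s - 1) + 1/2
             + (\<Sum>j=1..k+1. pochhammer s j * complex_of_real (q j 1))
             + pochhammer s (k+3) *
                 integral {0..1} (\<lambda>x. complex_of_real (p (k+2) x)
                    * hurwitz_zeta (s + of_nat k + 3) (x + 1))) \<and>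
    (\<forall>(k::nat).
           deriv riemann_zeta (- of_nat k) =
             - 1 / (of_nat k + 1)^2
             + complex_of_real (\<Sum>j=1..k. (-1)^(j+1) * (fact k / fact (k - j)) * q j 1
                    * (harm k - harm (k - j)))
             + (-1)^k * fact k *
                 integral {0..1} (\<lambda>x. complex_of_real (p (k+1) x)
                    * hurwitz_zeta 2 (x + 1))) \<and>
    (deriv riemann_zeta 0 =
           -1 + integral {0..1} (\<lambda>x. complex_of_real (p 1 x) * hurwitz_zeta 2 (x + 1)))"
  proof (intro conjI)
  show "\<forall>k. k \<ge> 2 \<longrightarrow> hurwitz_zeta (- of_nat k) a = complex_of_real
             (- (a ^ (k+1)) / (k+1) + 1/2 * a ^ k
              + (\<Sum>j=1..k. (-1)^j * q j 1 * (fact k / fact (k - j)) * a ^ (k - j)))"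
    using part_d[OF assms] by blast
qed (use part_a[OF assms] part_b[OF assms] part_c[OF assms] part_e part_f part_g in auto)

end
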